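(* Let $n,m,N$ be positive integers, let $A_0,\ldots,A_m\in\mathbb{R}^{n\times n}$, let $\tau_0=0$ and $\tau_1,\ldots,\tau_m>0$, and put $\tau_{\max}=\max_i\tau_i$. Let $\theta_{N,-N},\ldots,\theta_{N,0}$ be $N+1$ distinct points of $[-\tau_{\max},0]$ with $\theta_{N,0}=0$, let $l_{N,k}$ ($k=-N,\ldots,0$) be the corresponding Lagrange polynomials of degree $N$ ($l_{N,k}(\theta_{N,i})=1$ if $i=k$ and $0$ otherwise), and let $d_{i,k}=l_{N,k}'(\theta_{N,i})$. Define the $(N+1)n\times(N+1)n$ block matrix ${\bf A_N}$ whose block rows indexed by $i=-N,\ldots,-1$ are $[d_{i,-N}I_n\ \cdots\ d_{i,-1}I_n\ \ d_{i,0}I_n]$ and whose last block row is $[\Gamma_{-N}\ \cdots\ \Gamma_{-1}\ \Gamma_0]$, where $\Gamma_0=A_0+\sum_{l=1}^m A_l\,l_{N,0}(-\tau_l)$ and $\Gamma_k=\sum_{l=1}^m A_l\,l_{N,k}(-\tau_l)$ for $k=-N,\ldots,-1$; and let ${\bf B_N}=[0_n\ \cdots\ 0_n\ I_n]^*\in\mathbb{R}^{(N+1)n\times n}$. For $\lambda\in\mathbb{C}$ let $p_N(\cdot;\lambda)$ be the polynomial of degree (at most) $N$ with $p_N(0;\lambda)=1$ and $p_N'(\theta_{N,i};\lambda)=\lambda\,p_N(\theta_{N,i};\lambda)$ for $i=-N,\ldots,-1$. Then, as matrix-valued functions of $\lambda$ (at every $\lambda$ where both sides are defined), $$ {\bf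 B_N}^*(\lambda I_{(N+1)n}-{\bf A_N})^{-1}{\bf B_N}=\Big(\lambda I_n-A_0-\sum_{i=1}^m A_i\,p_N(-\tau_i;\lambda)\Big)^{-1}. $$
   Context: ${\bf A_N},{\bf B_N}$ describe a spectral (collocation) discretization of the delay system $\dot x(t)=\sum_{i=0}^m A_ix(t-\tau_i)+u(t)$, $y=x$. The superscript $*$ denotes conjugate transpose. *)

theory Defs
  imports "Jordan_Normal_Form.Matrix" "HOL-Computational_Algebra.Polynomial"
begin

definition lagrange :: "(int \<Rightarrow> real) \<Rightarrow> nat \<Rightarrow> int \<Rightarrow> real poly" where
  "lagrange \<theta> N k =
     (\<Prod>j\<in>{-int N..0} - {k}. smult (1 / (\<theta> k - \<theta> j)) [:- \<theta> j, 1:])"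

definition dcoef :: "(int \<Rightarrow> real) \<Rightarrow> nat \<Rightarrow> int \<Rightarrow> int \<Rightarrow> real" where
  "dcoef \<theta> N i k = poly (pderiv (lagrange \<theta> N k)) (\<theta> i)"

definition Gamma :: "nat \<Rightarrow> nat \<Rightarrow> (nat \<Rightarrow> real mat) \<Rightarrow> (nat \<Rightarrow> real)
     \<Rightarrow> (int \<Rightarrow> real) \<Rightarrow> nat \<Rightarrow> int \<Rightarrow> real mat" where
  "Gamma n m A \<tau> \<theta> N k = mat n n (\<lambda>(s,t).
      (if k = 0 then A 0 $$ (s,t) else 0)
      + (\<Sum>l\<in>{1..m}. poly (lagrange \<theta> N k) (- \<tau> l) * A l $$ (s,t)))"

(* A_N: block (r,c), r,c in {0..N}, corresponds to paper's block (r-N, c-N) *)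
definition AN :: "nat \<Rightarrow> nat \<Rightarrow> (nat \<Rightarrow> real mat) \<Rightarrow> (nat \<Rightarrow> real)
     \<Rightarrow> (int \<Rightarrow> real) \<Rightarrow> nat \<Rightarrow> real mat" where
  "AN n m A \<tau> \<theta> N = mat ((N+1)*n) ((N+1)*n) (\<lambda>(a,b).
      let r = a div n; s = a mod n; c = b div n; t = b mod n;
          i = int r - int N; k = int c - int N
      in if r < N then (if s = t then dcoef \<theta> N i k else 0)
         else Gamma n m A \<tau> \<theta> N k $$ (s,t))"

definition BN :: "nat \<Rightarrow> nat \<Rightarrow> real mat" where
  "BN n N = mat ((N+1)*n) n (\<lambda>(a,b). if a div n = N \<and> a mod n = b then 1 else 0)"

definition pN_cond :: "(int \<Rightarrow> real) \<Rightarrow> nat \<Rightarrow> complex \<Rightarrow> complex poly \<Rightarrow> bool" where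
  "pN_cond \<theta> N lam p \<longleftrightarrow> degree p \<le> N \<and> poly p 0 = 1 \<and>
     (\<forall>i\<in>{-int N..-1}. poly (pderiv p) (complex_of_real (\<theta> i))
                         = lam * poly p (complex_of_real (\<theta> i)))"

definition pN :: "(int \<Rightarrow> real) \<Rightarrow> nat \<Rightarrow> complex \<Rightarrow> complex poly" where
  "pN \<theta> N lam = (THE p. pN_cond \<theta> N lam p)"

definition cmat :: "real mat \<Rightarrow> complex mat" where
  "cmat M = map_mat complex_of_real M"

definition charM :: "nat \<Rightarrow> nat \<Rightarrow> (nat \<Rightarrow> real mat) \<Rightarrow> (nat \<Rightarrow> real)
     \<Rightarrow> (int \<Rightarrow> real) \<Rightarrow> nat \<Rightarrow> complex \<Rightarrow> complex mat" where
  "charM n m A \<tau> \<theta> N lam = mat n n (\<lambda>(s,t).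
      (if s = t then lam else 0) - complex_of_real (A 0 $$ (s,t))
      - (\<Sum>i\<in>{1..m}. complex_of_real (A i $$ (s,t)) * poly (pN \<theta> N lam) (- complex_of_real (\<tau> i))))"

definition is_inverse :: "complex mat \<Rightarrow> complex mat \<Rightarrow> bool" where
  "is_inverse R X \<longleftrightarrow> X * R = 1\<^sub>m (dim_row X) \<and> R * X = 1\<^sub>m (dim_row X)"

end

theory Submission
  imports Defs
begin

lemma poly_ofreal: "poly (map_poly complex_of_real p) (of_real x) = of_real (poly p x)"
  by (induction p) (auto simp: map_poly_pCons)

lemma pderiv_ofreal: "pderiv (map_poly complex_of_real p) = map_poly complex_of_real (pderiv p)"
  by (rule poly_eqI) (simp add: coeff_pderiv coeff_map_poly)

lemma pderiv_sum': "pderiv (sum f S) = (\<Sum>x\<in>S. pderiv (f x))"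
  using higher_pderiv_sum[of 1 f S] by simp

lemma card_nodes: "card {-int N..0} = N + 1" by simp

lemma lagrange_degree:
  assumes "k \<in> {-int N..0}" shows "degree (lagrange \<theta> N k) \<le> N"
proof -
  have "degree (lagrange \<theta> N k) \<le> (\<Sum>j\<in>{-int N..0} - {k}. degree (smult (1 / (\<theta> k - \<theta> j)) [:- \<theta> j, 1:]))"
    unfolding lagrange_def using degree_prod_sum_le[of "{-int N..0} - {k}" "\<lambda>j. smult (1 / (\<theta> k - \<theta> j)) [:- \<theta> j, 1:]"]
    by (simp only: o_def finite_Diff finite_atLeastAtMost_int)
  also have "\<dots> \<le> (\<Sum>j\<in>{-int N..0} - {k}. 1)"
    by (intro sum_mono) simp
  also have "\<dots> = N" using assms by simp
  finally show ?thesis .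
qed

lemma lagrange_node:
  assumes "inj_on \<theta> {-int N..0}" "j \<in> {-int N..0}" "k \<in> {-int N..0}"
  shows "poly (lagrange \<theta> N k) (\<theta> j) = (if j = k then 1 else 0)"
proof (cases "j = k")
  case True
  have "poly (lagrange \<theta> N k) (\<theta> j) = (\<Prod>i\<in>{-int N..0} - {k}. 1)"
    unfolding lagrange_def poly_prod
  proof (intro prod.cong refl)
    fix i assume "i \<in> {-int N..0} - {k}"
    then have "\<theta> k \<noteq> \<theta> i" using assms inj_onD[OF assms(1), of k i] by auto
    then show "poly (smult (1 / (\<theta> k - \<theta> i)) [:- \<theta> i, 1:]) (\<theta> j) = 1"
      using True by (simp add: diff_divide_distrib[symmetric])
  qed
  then show ?thesis using True by simp
next
  case False
  have "poly (lagrange \<theta> N k) (\<theta> j) = 0"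
    unfolding lagrange_def poly_prod
    using assms False by (intro prod_zero bexI[where x=j]) auto
  then show ?thesis using False by simp
qed

definition LC :: "(int \<Rightarrow> real) \<Rightarrow> nat \<Rightarrow> int \<Rightarrow> complex poly" where
  "LC \<theta> N k = map_poly complex_of_real (lagrange \<theta> N k)"

lemma interp:
  fixes p :: "complex poly"
  assumes inj: "inj_on \<theta> {-int N..0}" and deg: "degree p \<le> N"
  shows "p = (\<Sum>k\<in>{-int N..0}. smult (poly p (of_real (\<theta> k))) (LC \<theta> N k))"
proof (rule poly_eqI_degree[where A = "(\<lambda>k. complex_of_real (\<theta> k)) ` {-int N..0}"])
  have injc: "inj_on (\<lambda>k. complex_of_real (\<theta> k)) {-int N..0}"
    using inj by (auto simp: inj_on_def)
  have cardA: "card ((\<lambda>k. complex_of_real (\<theta> k)) ` {-int N..0}) = N + 1"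
    using card_image[OF injc] by simp
  fix x assume "x \<in> (\<lambda>k. complex_of_real (\<theta> k)) ` {-int N..0}"
  then obtain j where j: "j \<in> {-int N..0}" "x = of_real (\<theta> j)" by auto
  have "poly (\<Sum>k\<in>{-int N..0}. smult (poly p (of_real (\<theta> k))) (LC \<theta> N k)) x
      = (\<Sum>k\<in>{-int N..0}. poly p (of_real (\<theta> k)) * (if j = k then 1 else 0))"
    unfolding poly_sum j(2) LC_def
    by (intro sum.cong refl) (simp add: poly_ofreal lagrange_node[OF inj j(1)])
  also have "\<dots> = poly p x" using j by (simp add: if_distrib cong: if_cong)
  finally show "poly p x = poly (\<Sum>k\<in>{-int N..0}. smult (poly p (of_real (\<theta> k))) (LC \<theta> N k)) x" by simp
next
  have injc: "inj_on (\<lambda>k. complex_of_real (\<theta> k)) {-int N..0}"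
    using inj by (auto simp: inj_on_def)
  have cardA: "card ((\<lambda>k. complex_of_real (\<theta> k)) ` {-int N..0}) = N + 1"
    using card_image[OF injc] by simp
  show "degree p < card ((\<lambda>k. complex_of_real (\<theta> k)) ` {-int N..0})" using deg cardA by simp
  have "degree (\<Sum>k\<in>{-int N..0}. smult (poly p (of_real (\<theta> k))) (LC \<theta> N k)) \<le> N"
    by (intro degree_sum_le) (auto simp: LC_def degree_map_poly intro: order.trans[OF degree_smult_le] lagrange_degree)
  then show "degree (\<Sum>k\<in>{-int N..0}. smult (poly p (of_real (\<theta> k))) (LC \<theta> N k)) < card ((\<lambda>k. complex_of_real (\<theta> k)) ` {-int N..0})"
    using cardA by simp
qed


lemma sum_split_add: fixes k :: nat shows "(\<Sum>c<a+k. f c) = (\<Sum>c<a. f c) + (\<Sum>t<k. f (a+t))"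
  by (induction k) (auto simp: add.assoc)

lemma sum_reindex_block: fixes K :: nat shows "(\<Sum>c<K*n. f c) = (\<Sum>c'<K. \<Sum>t<n. f (c'*n+t))"
proof (induction K)
  case (Suc K)
  have "(\<Sum>c<Suc K*n. f c) = (\<Sum>c<K*n+n. f c)" by (simp add: add.commute)
  also have "\<dots> = (\<Sum>c<K*n. f c) + (\<Sum>t<n. f (K*n+t))" by (rule sum_split_add)
  finally show ?case using Suc by simp
qed simp

lemma block_bound: "(r::nat) < K \<Longrightarrow> s < n \<Longrightarrow> r*n+s < K*n"
proof -
  assume "r < K" "s < n"
  then have "r*n+s < r*n+n" by simp
  also have "\<dots> = Suc r * n" by simp
  also have "\<dots> \<le> K*n" using \<open>r < K\<close> by (intro mult_le_mono1) simp
  finally show ?thesis .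
qed

lemma block_eq:
  fixes r c s t n :: nat
  assumes "s < n" "t < n"
  shows "(r*n+s = c*n+t) \<longleftrightarrow> (r = c \<and> s = t)"
proof
  assume h: "r*n+s = c*n+t"
  have "(r*n+s) div n = (c*n+t) div n" "(r*n+s) mod n = (c*n+t) mod n" using h by simp_all
  then show "r = c \<and> s = t" using assms by simp
qed simp

lemma sum_nodes: "(\<Sum>c<N+1. g (int c - int N)) = (\<Sum>k\<in>{-int N..0}. g k)"
  by (rule sum.reindex_bij_witness[where j = "\<lambda>c. int c - int N" and i = "\<lambda>k. nat (k + int N)"]) auto

lemma AN_entry:
  assumes "r < N+1" "c < N+1" "s < n" "t < n"
  shows "AN n m A \<tau> \<theta> N $$ (r*n+s, c*n+t) =
    (if r < N then (if s = t then dcoef \<theta> N (int r - int N) (int c - int N) else 0)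
     else Gamma n m A \<tau> \<theta> N (int c - int N) $$ (s,t))"
  using assms block_bound[OF assms(1,3)] block_bound[OF assms(2,4)]
  by (simp add: AN_def Let_def)

lemma interp_deriv:
  fixes p :: "complex poly"
  assumes inj: "inj_on \<theta> {-int N..0}" and deg: "degree p \<le> N"
  shows "poly (pderiv p) (of_real (\<theta> i)) =
     (\<Sum>c<N+1. poly p (of_real (\<theta> (int c - int N))) * of_real (dcoef \<theta> N i (int c - int N)))"
proof -
  have "poly (pderiv p) (of_real (\<theta> i)) =
     poly (pderiv (\<Sum>k\<in>{-int N..0}. smult (poly p (of_real (\<theta> k))) (LC \<theta> N k))) (of_real (\<theta> i))"
    using interp[OF inj deg] by simp
  also have "\<dots> = (\<Sum>k\<in>{-int N..0}. poly p (of_real (\<theta> k)) * of_real (dcoef \<theta> N i k))"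
    by (simp add: pderiv_sum' poly_sum pderiv_smult LC_def pderiv_ofreal poly_ofreal dcoef_def)
  also have "\<dots> = (\<Sum>c<N+1. poly p (of_real (\<theta> (int c - int N))) * of_real (dcoef \<theta> N i (int c - int N)))"
    by (rule sum_nodes[symmetric])
  finally show ?thesis .
qed

lemma interp_val:
  fixes p :: "complex poly"
  assumes inj: "inj_on \<theta> {-int N..0}" and deg: "degree p \<le> N"
  shows "poly p (of_real x) =
     (\<Sum>c<N+1. poly p (of_real (\<theta> (int c - int N))) * of_real (poly (lagrange \<theta> N (int c - int N)) x))"
proof -
  have "poly p (of_real x) =
     poly (\<Sum>k\<in>{-int N..0}. smult (poly p (of_real (\<theta> k))) (LC \<theta> N k)) (of_real x)"
    using interp[OF inj deg] by simp
  also have "\<dots> = (\<Sum>k\<in>{-int N..0}. poly p (of_real (\<theta> k)) * of_real (poly (lagrange \<theta> N k) x))"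
    by (simp add: poly_sum LC_def poly_ofreal)
  also have "\<dots> = (\<Sum>c<N+1. poly p (of_real (\<theta> (int c - int N))) * of_real (poly (lagrange \<theta> N (int c - int N)) x))"
    by (rule sum_nodes[symmetric])
  finally show ?thesis .
qed


theorem theorem1:
  fixes n m N :: nat
    and A :: "nat \<Rightarrow> real mat"
    and \<tau> :: "nat \<Rightarrow> real"
    and \<theta> :: "int \<Rightarrow> real"
    and lam :: complex
    and R1 R2 :: "complex mat"
  assumes "n > 0" "m > 0" "N > 0"
    and "\<forall>i\<in>{0..m}. A i \<in> carrier_mat n n"
    and "\<tau> 0 = 0" "\<forall>i\<in>{1..m}. \<tau> i > 0"
    and "inj_on \<theta> {-int N..0}"
    and "\<forall>k\<in>{-int N..0}. - Max (\<tau> ` {0..m}) \<le> \<theta> k \<and> \<theta> k \<le> 0"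
    and "\<theta> 0 = 0"
    and "\<exists>!p. pN_cond \<theta> N lam p"
    and "R1 \<in> carrier_mat ((N+1)*n) ((N+1)*n)"
    and "is_inverse R1 (lam \<cdot>\<^sub>m 1\<^sub>m ((N+1)*n) - cmat (AN n m A \<tau> \<theta> N))"
    and "R2 \<in> carrier_mat n n"
    and "is_inverse R2 (charM n m A \<tau> \<theta> N lam)"
  shows "transpose_mat (cmat (BN n N)) * R1 * cmat (BN n N) = R2"
proof -
  note inj = assms(7)
  define p where "p = pN \<theta> N lam"
  have pc: "pN_cond \<theta> N lam p" using theI'[OF assms(10)] unfolding pN_def p_def .
  have deg: "degree p \<le> N" using pc by (simp add: pN_cond_def)
  define P where "P c = poly p (of_real (\<theta> (int c - int N)))" for c :: nat
  have PN: "P N = 1" using pc assms(9) by (simp add: P_def pN_cond_def)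
  define K where "K = (N+1)*n"
  define M where "M = lam \<cdot>\<^sub>m 1\<^sub>m K - cmat (AN n m A \<tau> \<theta> N)"
  define X where "X = mat K n (\<lambda>(a,b). P (a div n) * R2 $$ (a mod n, b))"
  have R2C: "R2 * charM n m A \<tau> \<theta> N lam = 1\<^sub>m n"
    using assms(14) by (simp add: is_inverse_def charM_def)
  have CR2: "charM n m A \<tau> \<theta> N lam * R2 = 1\<^sub>m n"
    using assms(14) by (simp add: is_inverse_def charM_def)
  have M_entry: "M $$ (r*n+s, c*n+t) = (if r = c \<and> s = t then lam else 0)
       - of_real (AN n m A \<tau> \<theta> N $$ (r*n+s, c*n+t))"
    if "r < N+1" "c < N+1" "s < n" "t < n" for r c s t
    using that block_bound[OF that(1,3)] block_bound[OF that(2,4)]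
    by (simp add: M_def K_def cmat_def AN_def block_eq)
  have dM: "M \<in> carrier_mat K K" unfolding carrier_mat_def by (simp add: M_def cmat_def AN_def K_def)
  have MX: "M * X = cmat (BN n N)"
  proof (rule eq_matI)
    show "dim_row (M * X) = dim_row (cmat (BN n N))" by (simp add: M_def cmat_def BN_def K_def AN_def)
    show "dim_col (M * X) = dim_col (cmat (BN n N))" by (simp add: X_def cmat_def BN_def K_def)
    fix a b assume "a < dim_row (cmat (BN n N))" "b < dim_col (cmat (BN n N))"
    then have ab: "a < K" "b < n" by (simp_all add: cmat_def BN_def K_def)
    define r where "r = a div n"
    define s where "s = a mod n"
    have a: "a = r*n+s" by (simp add: r_def s_def)
    have r: "r < N+1" using ab(1) unfolding K_def r_def by (simp add: less_mult_imp_div_less)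
    have s: "s < n" using assms(1) by (simp add: s_def)
    have "(M*X) $$ (a,b) = (\<Sum>c<K. M $$ (a,c) * X $$ (c,b))"
      using ab dM unfolding index_mult_mat(1)[of a M b X, OF _ ] 
      by (auto simp: X_def scalar_prod_def atLeast0LessThan intro!: sum.cong)
    also have "\<dots> = (\<Sum>c'<N+1. \<Sum>t<n. M $$ (a,c'*n+t) * X $$ (c'*n+t,b))"
      unfolding K_def by (rule sum_reindex_block)
    also have "\<dots> = (\<Sum>c'<N+1. \<Sum>t<n. ((if r = c' \<and> s = t then lam else 0)
       - of_real (AN n m A \<tau> \<theta> N $$ (r*n+s, c'*n+t))) * (P c' * R2 $$ (t,b)))"
      using ab block_bound[of _ "N+1" _ n] r s
      by (intro sum.cong refl) (simp add: a M_entry X_def K_def)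
    finally have e1: "(M*X) $$ (a,b) = \<dots>" .
    show "(M*X) $$ (a,b) = cmat (BN n N) $$ (a,b)"
    proof (cases "r < N")
      case True
      define i where "i = int r - int N"
      have iN: "i \<in> {-int N..-1}" using True by (simp add: i_def)
      have "(M*X) $$ (a,b) = (\<Sum>c'<N+1. ((if r = c' then lam else 0)
          - of_real (dcoef \<theta> N i (int c' - int N))) * (P c' * R2 $$ (s,b)))"
        unfolding e1
      proof (intro sum.cong refl)
        fix c' assume c': "c' \<in> {..<N+1}"
        have "(\<Sum>t<n. ((if r = c' \<and> s = t then lam else 0)
           - of_real (AN n m A \<tau> \<theta> N $$ (r*n+s, c'*n+t))) * (P c' * R2 $$ (t,b)))
          = (\<Sum>t<n. if t = s then ((if r = c' then lam else 0)
          - of_real (dcoef \<theta> N i (int c' - int N))) * (P c' * R2 $$ (t,b)) else 0)"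
          using c' r s True by (intro sum.cong refl) (auto simp: AN_entry i_def)
        also have "\<dots> = ((if r = c' then lam else 0)
          - of_real (dcoef \<theta> N i (int c' - int N))) * (P c' * R2 $$ (s,b))"
          using s by (simp add: sum.delta)
        finally show "(\<Sum>t<n. ((if r = c' \<and> s = t then lam else 0)
           - of_real (AN n m A \<tau> \<theta> N $$ (r*n+s, c'*n+t))) * (P c' * R2 $$ (t,b))) = \<dots>" .
      qed
      also have "\<dots> = (lam * P r - (\<Sum>c'<N+1. P c' * of_real (dcoef \<theta> N i (int c' - int N)))) * R2 $$ (s,b)"
      proof -
        let ?R = "R2 $$ (s,b)"
        let ?d = "\<lambda>c'. of_real (dcoef \<theta> N i (int c' - int N)) :: complex"
        have "(\<Sum>c'<N+1. ((if r = c' then lam else 0) - ?d c') * (P c' * ?R))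
            = (\<Sum>c'<N+1. (if c' = r then lam * P c' * ?R else 0) - P c' * ?d c' * ?R)"
          by (intro sum.cong) (auto simp: algebra_simps)
        also have "\<dots> = (\<Sum>c'<N+1. (if c' = r then lam * P c' * ?R else 0)) - (\<Sum>c'<N+1. P c' * ?d c' * ?R)"
          by (rule sum_subtractf)
        also have "\<dots> = lam * P r * ?R - (\<Sum>c'<N+1. P c' * ?d c') * ?R"
          using r by (simp add: sum_distrib_right del: sum.lessThan_Suc lessThan_Suc)
        finally show ?thesis by (simp add: algebra_simps)
      qed
      also have "(\<Sum>c'<N+1. P c' * of_real (dcoef \<theta> N i (int c' - int N))) = poly (pderiv p) (of_real (\<theta> i))"
        unfolding P_def by (rule interp_deriv[OF inj deg, symmetric])
      also have "\<dots> = lam * P r" using pc iN by (simp add: pN_cond_def P_def i_def)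
      finally have "(M*X) $$ (a,b) = 0" by simp
      moreover have "cmat (BN n N) $$ (a,b) = 0"
        using ab True by (simp add: cmat_def BN_def K_def r_def)
      ultimately show ?thesis by simp
    next
      case False
      then have rN: "r = N" using r by simp
      let ?C = "charM n m A \<tau> \<theta> N lam"
      have "(M*X) $$ (a,b) = (\<Sum>t<n. \<Sum>c'<N+1. ((if r = c' \<and> s = t then lam else 0)
       - of_real (AN n m A \<tau> \<theta> N $$ (r*n+s, c'*n+t))) * (P c' * R2 $$ (t,b)))"
        unfolding e1 by (rule sum.swap)
      also have "\<dots> = (\<Sum>t<n. ?C $$ (s,t) * R2 $$ (t,b))"
      proof (intro sum.cong refl)
        fix t assume t: "t \<in> {..<n}"
        let ?R = "R2 $$ (t,b)"
        let ?L = "\<lambda>c' l. of_real (poly (lagrange \<theta> N (int c' - int N)) (- \<tau> l)) :: complex"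
        let ?Al = "\<lambda>l. of_real (A l $$ (s,t)) :: complex"
        have S0: "(\<Sum>c'<N+1. ((if r = c' \<and> s = t then lam else 0)
           - of_real (AN n m A \<tau> \<theta> N $$ (r*n+s, c'*n+t))) * (P c' * ?R))
          = (\<Sum>c'<N+1. (if c' = N then ((if s = t then lam else 0) - of_real (A 0 $$ (s,t))) * P c' * ?R else 0)
              - (\<Sum>l\<in>{1..m}. ?Al l * (P c' * ?L c' l)) * ?R)"
        proof (intro sum.cong refl)
          fix c' assume c': "c' \<in> {..<N+1}"
          have "AN n m A \<tau> \<theta> N $$ (r*n+s, c'*n+t) = Gamma n m A \<tau> \<theta> N (int c' - int N) $$ (s,t)"
            using c' r s t rN by (simp add: AN_entry)
          also have "\<dots> = (if c' = N then A 0 $$ (s,t) else 0)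
              + (\<Sum>l\<in>{1..m}. poly (lagrange \<theta> N (int c' - int N)) (- \<tau> l) * A l $$ (s,t))"
            using s t c' by (simp add: Gamma_def)
          finally have G: "AN n m A \<tau> \<theta> N $$ (r*n+s, c'*n+t) = \<dots>" .
          show "((if r = c' \<and> s = t then lam else 0)
           - of_real (AN n m A \<tau> \<theta> N $$ (r*n+s, c'*n+t))) * (P c' * ?R)
           = (if c' = N then ((if s = t then lam else 0) - of_real (A 0 $$ (s,t))) * P c' * ?R else 0)
              - (\<Sum>l\<in>{1..m}. ?Al l * (P c' * ?L c' l)) * ?R"
            unfolding G using rN
            by (auto simp: algebra_simps sum_distrib_left sum_distrib_right)
        qed
        have S1: "(\<Sum>c'<N+1. (if c' = N then ((if s = t then lam else 0) - of_real (A 0 $$ (s,t))) * P c' * ?R else 0) - (\<Sum>l\<in>{1..m}. ?Al l * (P c' * ?L c' l)) * ?R) = (\<Sum>c'<N+1. (if c' = N then ((if s = t then lam else 0) - of_real (A 0 $$ (s,t))) * P c' * ?R else 0))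
              - (\<Sum>c'<N+1. (\<Sum>l\<in>{1..m}. ?Al l * (P c' * ?L c' l)) * ?R)"
          by (rule sum_subtractf)
        have E2: "(\<Sum>c'<N+1. (if c' = N then ((if s = t then lam else 0) - of_real (A 0 $$ (s,t))) * P c' * ?R else 0))
            = ((if s = t then lam else 0) - of_real (A 0 $$ (s,t))) * ?R"
          using PN by (simp del: sum.lessThan_Suc lessThan_Suc)
        have E3: "(\<Sum>c'<N+1. (\<Sum>l\<in>{1..m}. ?Al l * (P c' * ?L c' l)) * ?R)
            = (\<Sum>l\<in>{1..m}. ?Al l * (\<Sum>c'<N+1. P c' * ?L c' l)) * ?R"
          by (simp add: sum_distrib_right sum_distrib_left del: sum.lessThan_Suc lessThan_Suc) (rule sum.swap)
        have E4: "(\<lambda>l. ?Al l * (\<Sum>c'<N+1. P c' * ?L c' l)) = (\<lambda>l. ?Al l * poly p (- of_real (\<tau> l)))"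
        proof
          fix l
          have "poly p (of_real (- \<tau> l)) = (\<Sum>c'<N+1. P c' * ?L c' l)"
            unfolding P_def by (rule interp_val[OF inj deg])
          then show "?Al l * (\<Sum>c'<N+1. P c' * ?L c' l) = ?Al l * poly p (- of_real (\<tau> l))" by simp
        qed
        have E5: "?C $$ (s,t) = (if s = t then lam else 0) - of_real (A 0 $$ (s,t))
             - (\<Sum>l\<in>{1..m}. ?Al l * poly p (- of_real (\<tau> l)))"
          using s t by (simp add: charM_def p_def)
        show "(\<Sum>c'<N+1. ((if r = c' \<and> s = t then lam else 0)
           - of_real (AN n m A \<tau> \<theta> N $$ (r*n+s, c'*n+t))) * (P c' * ?R)) = ?C $$ (s,t) * ?R"
          unfolding S0 S1 E2 E3 E4 E5 by (simp add: algebra_simps)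
      qed
      also have "\<dots> = (?C * R2) $$ (s,b)"
        using s ab R2C assms(13) by (auto simp: charM_def scalar_prod_def atLeast0LessThan intro!: sum.cong)
      also have "\<dots> = (if s = b then 1 else 0)" using CR2 s ab by simp
      also have "\<dots> = cmat (BN n N) $$ (a,b)"
        using ab rN s by (simp add: cmat_def BN_def K_def r_def s_def)
      finally show ?thesis .
    qed
  qed
  have R1M: "R1 * M = 1\<^sub>m K"
    using assms(12) dM unfolding M_def K_def is_inverse_def by (simp add: cmat_def AN_def)
  have dX: "X \<in> carrier_mat K n" by (simp add: X_def)
  have R1c: "R1 \<in> carrier_mat K K" using assms(11) by (simp add: K_def)
  have BNc: "cmat (BN n N) \<in> carrier_mat K n" by (simp add: cmat_def BN_def K_def)
  have R1B: "R1 * cmat (BN n N) = X"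
  proof -
    have "R1 * cmat (BN n N) = R1 * (M * X)" by (simp add: MX)
    also have "\<dots> = (R1 * M) * X" using R1c dM dX by (simp add: assoc_mult_mat)
    also have "\<dots> = X" using R1M dX by simp
    finally show ?thesis .
  qed
  have "transpose_mat (cmat (BN n N)) * R1 * cmat (BN n N) = transpose_mat (cmat (BN n N)) * X"
    using R1c BNc by (simp add: assoc_mult_mat[of _ n K _ K _ n] R1B)
  also have "\<dots> = R2"
  proof (rule eq_matI)
    show "dim_row (transpose_mat (cmat (BN n N)) * X) = dim_row R2" using assms(13) by (simp add: cmat_def BN_def)
    show "dim_col (transpose_mat (cmat (BN n N)) * X) = dim_col R2" using assms(13) by (simp add: X_def)
    fix s b assume "s < dim_row R2" "b < dim_col R2"
    then have sb: "s < n" "b < n" using assms(13) by auto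
    have NK: "N*n+s < K" unfolding K_def using block_bound[of N "N+1" s n] sb by simp
    have "(transpose_mat (cmat (BN n N)) * X) $$ (s,b) = (\<Sum>a<K. cmat (BN n N) $$ (a,s) * X $$ (a,b))"
      using sb BNc dX by (auto simp: scalar_prod_def atLeast0LessThan intro!: sum.cong)
    also have "\<dots> = (\<Sum>a<K. if a = N*n+s then X $$ (a,b) else 0)"
    proof (intro sum.cong refl)
      fix a assume a: "a \<in> {..<K}"
      have "(a div n = N \<and> a mod n = s) = (a = N*n+s)"
        using block_eq[of "a mod n" n s "a div n" N] sb by simp
      then show "cmat (BN n N) $$ (a,s) * X $$ (a,b) = (if a = N*n+s then X $$ (a,b) else 0)"
        using a sb by (simp add: cmat_def BN_def K_def)
    qed
    also have "\<dots> = X $$ (N*n+s, b)" using NK by simp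
    also have "\<dots> = R2 $$ (s,b)" using NK sb PN by (simp add: X_def)
    finally show "(transpose_mat (cmat (BN n N)) * X) $$ (s,b) = R2 $$ (s,b)" .
  qed
  finally show ?thesis .
qed

end
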